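(* Let $P$ be a graded poset and let $\sim$ be an equivalence relation on $P$ such that $x\sim y$ implies $\rho(x)=\rho(y)$. On the set $P/\sim$ of equivalence classes define $X\le Y$ iff there exist $x\in X$, $y\in Y$ and $z_1,\dots,z_k\in P$ such that $x\le z_1\sim z_2\le z_3\sim\cdots\le z_{k-1}\sim z_k\le y$. Then: (1) $P/\sim$ with $\le$ is a poset; (2) for $X,Y\in P/\sim$, $X\lessdot Y$ if and only if $x\lessdot y$ for some $x\in X$ and $y\in Y$; (3) $P/\sim$ is graded, and for $X\in P/\sim$ we have $\rho(X)=\rho(x)$ for all $x\in X$.
   Context: $P$ is a finite graded poset with rank function $\rho$. *)

theory Defs
  imports Main
begin

definition poset_on :: "'a set \<Rightarrow> ('a \<Rightarrow> 'a \<Rightarrow> bool) \<Rightarrow> bool" where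
  "poset_on A le \<longleftrightarrow>
     (\<forall>x\<in>A. le x x) \<and>
     (\<forall>x\<in>A. \<forall>y\<in>A. le x y \<and> le y x \<longrightarrow> x = y) \<and>
     (\<forall>x\<in>A. \<forall>y\<in>A. \<forall>z\<in>A. le x y \<and> le y z \<longrightarrow> le x z)"

definition covers :: "'a set \<Rightarrow> ('a \<Rightarrow> 'a \<Rightarrow> bool) \<Rightarrow> 'a \<Rightarrow> 'a \<Rightarrow> bool" where
  "covers A le x y \<longleftrightarrow> x \<in> A \<and> y \<in> A \<and> le x y \<and> x \<noteq> y \<and>
     \<not> (\<exists>z\<in>A. le x z \<and> le z y \<and> z \<noteq> x \<and> z \<noteq> y)"

definition graded :: "'a set \<Rightarrow> ('a \<Rightarrow> 'a \<Rightarrow> bool) \<Rightarrow> ('a \<Rightarrow> nat) \<Rightarrow> bool" where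
  "graded A le rho \<longleftrightarrow> poset_on A le \<and>
     (\<forall>x\<in>A. (\<forall>y\<in>A. le y x \<longrightarrow> y = x) \<longrightarrow> rho x = 0) \<and>
     (\<forall>x y. covers A le x y \<longrightarrow> rho y = rho x + 1)"

definition le_rel :: "'a set \<Rightarrow> ('a \<Rightarrow> 'a \<Rightarrow> bool) \<Rightarrow> 'a rel" where
  "le_rel P le = {(a, b). a \<in> P \<and> b \<in> P \<and> le a b}"

text \<open>Quotient order: X \<le> Y iff there are x in X, y in Y and z_1..z_k with
x \<le> z_1 \<sim> z_2 \<le> ... \<sim> z_k \<le> y, i.e. (x,y) \<in> (\<le> O \<sim>)^* O \<le>.\<close>
definition quot_le :: "'a set \<Rightarrow> ('a \<Rightarrow> 'a \<Rightarrow> bool) \<Rightarrow> 'a rel \<Rightarrow> 'a set \<Rightarrow> 'a set \<Rightarrow> bool" where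
  "quot_le P le E X Y \<longleftrightarrow>
     (\<exists>x\<in>X. \<exists>y\<in>Y. (x, y) \<in> (le_rel P le O E)\<^sup>* O le_rel P le)"

end

theory Submission
  imports Defs
begin

lemma rank_strict_aux:
  assumes fin: "finite P" and gr: "graded P le rho"
  shows "\<forall>x y. card {w\<in>P. le x w \<and> le w y} = n \<longrightarrow> x \<in> P \<longrightarrow> y \<in> P \<longrightarrow> le x y \<longrightarrow> x \<noteq> y \<longrightarrow> rho x < rho y"
proof (induction n rule: less_induct)
  case (less n)
  have po: "poset_on P le" using gr unfolding graded_def by blast
  have cov: "\<And>x y. covers P le x y \<Longrightarrow> rho y = rho x + 1" using gr unfolding graded_def by blast
  show ?case
  proof (intro allI impI)
    fix x y assume c: "card {w\<in>P. le x w \<and> le w y} = n" and xP: "x \<in> P" and yP: "y \<in> P"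
      and xy: "le x y" and ne: "x \<noteq> y"
    show "rho x < rho y"
    proof (cases "covers P le x y")
      case True then show ?thesis using cov by force
    next
      case False
      then obtain z where zP: "z \<in> P" and xz: "le x z" and zy: "le z y" and zx: "z \<noteq> x" and zy': "z \<noteq> y"
        using xP yP xy ne unfolding covers_def by blast
      have s1: "{w\<in>P. le x w \<and> le w z} \<subset> {w\<in>P. le x w \<and> le w y}"
      proof
        show "{w\<in>P. le x w \<and> le w z} \<subseteq> {w\<in>P. le x w \<and> le w y}"
          using po zy zP yP unfolding poset_on_def by blast
        have "y \<notin> {w\<in>P. le x w \<and> le w z}" using po zy zP yP zy' unfolding poset_on_def by blast
        moreover have "y \<in> {w\<in>P. le x w \<and> le w y}" using po yP xy unfolding poset_on_def by blast
        ultimately show "{w\<in>P. le x w \<and> le w z} \<noteq> {w\<in>P. le x w \<and> le w y}" by blast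
      qed
      have s2: "{w\<in>P. le z w \<and> le w y} \<subset> {w\<in>P. le x w \<and> le w y}"
      proof
        show "{w\<in>P. le z w \<and> le w y} \<subseteq> {w\<in>P. le x w \<and> le w y}"
          using po xz zP xP unfolding poset_on_def by blast
        have "x \<notin> {w\<in>P. le z w \<and> le w y}" using po xz zP xP zx unfolding poset_on_def by blast
        moreover have "x \<in> {w\<in>P. le x w \<and> le w y}" using po xP xy unfolding poset_on_def by blast
        ultimately show "{w\<in>P. le z w \<and> le w y} \<noteq> {w\<in>P. le x w \<and> le w y}" by blast
      qed
      have f: "finite {w\<in>P. le x w \<and> le w y}" using fin by simp
      have "card {w\<in>P. le x w \<and> le w z} < n" using psubset_card_mono[OF f s1] c by simp
      hence "rho x < rho z" using less.IH xP zP xz zx by metis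
      moreover have "card {w\<in>P. le z w \<and> le w y} < n" using psubset_card_mono[OF f s2] c by simp
      hence "rho z < rho y" using less.IH yP zP zy zy' by metis
      ultimately show ?thesis by simp
    qed
  qed
qed

lemma rank_strict:
  assumes "finite P" "graded P le rho" "x \<in> P" "y \<in> P" "le x y" "x \<noteq> y"
  shows "rho x < rho y"
  using rank_strict_aux[OF assms(1,2)] assms(3-) by blast

lemma rank_mono:
  assumes "finite P" "graded P le rho" "x \<in> P" "y \<in> P" "le x y"
  shows "rho x \<le> rho y"
  using rank_strict[OF assms] by fastforce

lemma chainR:
  assumes fin: "finite P" and gr: "graded P le rho" and eq: "equiv P E"
    and rE: "\<And>x y. (x, y) \<in> E \<Longrightarrow> rho x = rho y"
    and ab: "(a, b) \<in> (le_rel P le O E)\<^sup>*"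
  shows "rho a \<le> rho b \<and> (rho a = rho b \<longrightarrow> a = b \<or> (a, b) \<in> E)"
  using ab
proof (induction rule: rtrancl_induct)
  case base then show ?case by simp
next
  case (step b c)
  then obtain d where bd: "(b, d) \<in> le_rel P le" and dc: "(d, c) \<in> E" by blast
  have bP: "b \<in> P" and dP: "d \<in> P" and le: "le b d" using bd unfolding le_rel_def by auto
  have "rho b \<le> rho d" using rank_mono[OF fin gr bP dP le] .
  moreover have "rho d = rho c" using rE dc .
  moreover
  { assume h: "rho a = rho c"
    hence "rho a = rho b" "rho b = rho d" using step.IH calculation by auto
    hence ab': "a = b \<or> (a, b) \<in> E" using step.IH by auto
    have "b = d" using rank_strict[OF fin gr bP dP le] \<open>rho b = rho d\<close> by fastforce
    hence "(b, c) \<in> E" using dc by simp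
    hence "a = b \<or> (a, c) \<in> E" using ab' eq unfolding equiv_def trans_def by blast
    hence "a = c \<or> (a, c) \<in> E" using \<open>(b, c) \<in> E\<close> by blast }
  ultimately show ?case using step.IH by auto
qed

lemma chainQ:
  assumes fin: "finite P" and gr: "graded P le rho" and eq: "equiv P E"
    and rE: "\<And>x y. (x, y) \<in> E \<Longrightarrow> rho x = rho y"
    and ab: "(a, b) \<in> (le_rel P le O E)\<^sup>* O le_rel P le"
  shows "rho a \<le> rho b \<and> (rho a = rho b \<longrightarrow> (a, b) \<in> E)"
proof -
  obtain c where ac: "(a, c) \<in> (le_rel P le O E)\<^sup>*" and cb: "(c, b) \<in> le_rel P le" using ab by blast
  have cP: "c \<in> P" and bP: "b \<in> P" and le: "le c b" using cb unfolding le_rel_def by auto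
  have h: "rho a \<le> rho c \<and> (rho a = rho c \<longrightarrow> a = c \<or> (a, c) \<in> E)" using chainR[OF fin gr eq rE ac] .
  have "rho c \<le> rho b" using rank_mono[OF fin gr cP bP le] .
  moreover
  { assume "rho a = rho b"
    hence "rho a = rho c" "rho c = rho b" using h calculation by auto
    hence "c = b" using rank_strict[OF fin gr cP bP le] by fastforce
    moreover have "a = c \<or> (a, c) \<in> E" using h \<open>rho a = rho c\<close> by blast
    moreover have "(c, c) \<in> E" using eq cP unfolding equiv_def refl_on_def by blast
    ultimately have "(a, b) \<in> E" by blast }
  ultimately show ?thesis using h by auto
qed

lemma Q_refl:
  assumes "x \<in> P" "le x x"
  shows "(x, x) \<in> (le_rel P le O E)\<^sup>* O le_rel P le"
  using assms unfolding le_rel_def by blast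

lemma Q_trans:
  assumes "(x, y) \<in> (le_rel P le O E)\<^sup>* O le_rel P le" "(y, y') \<in> E"
    "(y', w) \<in> (le_rel P le O E)\<^sup>* O le_rel P le"
  shows "(x, w) \<in> (le_rel P le O E)\<^sup>* O le_rel P le"
proof -
  obtain a where xa: "(x, a) \<in> (le_rel P le O E)\<^sup>*" and ay: "(a, y) \<in> le_rel P le" using assms(1) by blast
  obtain b where yb: "(y', b) \<in> (le_rel P le O E)\<^sup>*" and bw: "(b, w) \<in> le_rel P le" using assms(3) by blast
  have "(a, y') \<in> le_rel P le O E" using ay assms(2) by blast
  hence "(x, y') \<in> (le_rel P le O E)\<^sup>*" using xa by (meson rtrancl_into_rtrancl)
  hence "(x, b) \<in> (le_rel P le O E)\<^sup>*" using yb by (rule rtrancl_trans)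
  thus ?thesis using bw by blast
qed

lemma Q_le_step:
  assumes "(b, d) \<in> le_rel P le" "(d, c) \<in> E" "(c, y) \<in> (le_rel P le O E)\<^sup>* O le_rel P le"
  shows "(b, y) \<in> (le_rel P le O E)\<^sup>* O le_rel P le"
proof -
  obtain a where ca: "(c, a) \<in> (le_rel P le O E)\<^sup>*" and ay: "(a, y) \<in> le_rel P le" using assms(3) by blast
  have "(b, c) \<in> le_rel P le O E" using assms(1,2) by blast
  hence "(b, a) \<in> (le_rel P le O E)\<^sup>*" using ca by (rule converse_rtrancl_into_rtrancl)
  thus ?thesis using ay by blast
qed

lemma cross:
  assumes eq: "equiv P E" and po: "poset_on P le"
    and cv: "covers (P // E) (quot_le P le E) X Y"
    and ab: "(a, b) \<in> (le_rel P le O E)\<^sup>*"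
  shows "a \<in> X \<Longrightarrow> (b, y) \<in> (le_rel P le O E)\<^sup>* O le_rel P le \<Longrightarrow> y \<in> Y \<Longrightarrow>
      b \<in> X \<or> (\<exists>u\<in>X. \<exists>v\<in>Y. le u v)"
  using ab
proof (induction rule: rtrancl_induct)
  case base then show ?case by simp
next
  case (step b c)
  have XP: "X \<in> P // E" and YP: "Y \<in> P // E" using cv unfolding covers_def by auto
  obtain d where bd: "(b, d) \<in> le_rel P le" and dc: "(d, c) \<in> E" using step.hyps(2) by blast
  have "(b, y) \<in> (le_rel P le O E)\<^sup>* O le_rel P le" using Q_le_step[OF bd dc step.prems(2)] .
  hence "b \<in> X \<or> (\<exists>u\<in>X. \<exists>v\<in>Y. le u v)" using step.IH step.prems by blast
  moreover
  { assume bX: "b \<in> X"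
    have dP: "d \<in> P" and cP: "c \<in> P" using dc eq unfolding equiv_def refl_on_def by auto
    define C where "C = E `` {c}"
    have CP: "C \<in> P // E" unfolding C_def using cP by (rule quotientI)
    have cC: "c \<in> C" unfolding C_def using eq cP by (rule equiv_class_self)
    have dC: "d \<in> C" unfolding C_def using dc eq unfolding equiv_def sym_def by blast
    have "(b, d) \<in> (le_rel P le O E)\<^sup>* O le_rel P le" using bd by blast
    hence XC: "quot_le P le E X C" unfolding quot_le_def using bX dC by blast
    have CY: "quot_le P le E C Y" unfolding quot_le_def using cC step.prems by blast
    have "C = X \<or> C = Y" using cv CP XC CY unfolding covers_def by blast
    moreover have "C = X \<Longrightarrow> c \<in> X" using cC by simp
    moreover have "C = Y \<Longrightarrow> \<exists>u\<in>X. \<exists>v\<in>Y. le u v" using bX dC bd unfolding le_rel_def by blast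
    ultimately have "c \<in> X \<or> (\<exists>u\<in>X. \<exists>v\<in>Y. le u v)" by blast }
  ultimately show ?case by blast
qed

theorem proposition3p15:
  fixes P :: "'a set" and le :: "'a \<Rightarrow> 'a \<Rightarrow> bool" and rho :: "'a \<Rightarrow> nat"
    and E :: "'a rel"
  assumes "finite P"
    and "graded P le rho"
    and "equiv P E"
    and "\<And>x y. (x, y) \<in> E \<Longrightarrow> rho x = rho y"
  shows "poset_on (P // E) (quot_le P le E) \<and>
         (\<forall>X\<in>P // E. \<forall>Y\<in>P // E.
           covers (P // E) (quot_le P le E) X Y \<longleftrightarrow> (\<exists>x\<in>X. \<exists>y\<in>Y. covers P le x y)) \<and>
         (\<exists>rhoQ. graded (P // E) (quot_le P le E) rhoQ \<and> (\<forall>X\<in>P // E. \<forall>x\<in>X. rhoQ X = rho x))"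
proof -
  note fin = assms(1) and gr = assms(2) and eq = assms(3) and rE = assms(4)
  have po: "poset_on P le" using gr unfolding graded_def by blast
  have cov: "\<And>x y. covers P le x y \<Longrightarrow> rho y = rho x + 1" using gr unfolding graded_def by blast
  have sub: "\<And>X x. X \<in> P // E \<Longrightarrow> x \<in> X \<Longrightarrow> x \<in> P" using in_quotient_imp_subset[OF eq] by blast
  have inrel: "\<And>X x y. X \<in> P // E \<Longrightarrow> x \<in> X \<Longrightarrow> y \<in> X \<Longrightarrow> (x, y) \<in> E"
    using in_quotient_imp_in_rel[OF eq] by blast
  have qeq: "\<And>X Y x y. X \<in> P // E \<Longrightarrow> Y \<in> P // E \<Longrightarrow> x \<in> X \<Longrightarrow> y \<in> Y \<Longrightarrow> (X = Y) = ((x, y) \<in> E)"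
    using quotient_eq_iff[OF eq] by blast
  have lerefl: "\<And>x. x \<in> P \<Longrightarrow> le x x" using po unfolding poset_on_def by blast
  have qstrict: "\<And>X W x w. X \<in> P // E \<Longrightarrow> W \<in> P // E \<Longrightarrow> quot_le P le E X W \<Longrightarrow> X \<noteq> W
      \<Longrightarrow> x \<in> X \<Longrightarrow> w \<in> W \<Longrightarrow> rho x < rho w"
  proof -
    fix X W x w assume XP: "X \<in> P // E" and WP: "W \<in> P // E" and XW: "quot_le P le E X W"
      and ne: "X \<noteq> W" and xX: "x \<in> X" and wW: "w \<in> W"
    obtain x' w' where x'X: "x' \<in> X" and w'W: "w' \<in> W"
      and q: "(x', w') \<in> (le_rel P le O E)\<^sup>* O le_rel P le" using XW unfolding quot_le_def by blast
    have h: "rho x' \<le> rho w' \<and> (rho x' = rho w' \<longrightarrow> (x', w') \<in> E)" using chainQ[OF fin gr eq rE q] .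
    have "(x', w') \<notin> E" using qeq[OF XP WP x'X w'W] ne by blast
    hence "rho x' < rho w'" using h by auto
    moreover have "rho x = rho x'" using rE inrel[OF XP xX x'X] by blast
    moreover have "rho w = rho w'" using rE inrel[OF WP wW w'W] by blast
    ultimately show "rho x < rho w" by simp
  qed
  have P1: "poset_on (P // E) (quot_le P le E)"
    unfolding poset_on_def
  proof (intro conjI ballI impI)
    fix X assume XP: "X \<in> P // E"
    obtain x where xX: "x \<in> X" using in_quotient_imp_non_empty[OF eq XP] by blast
    have xP: "x \<in> P" using sub XP xX .
    have "(x, x) \<in> (le_rel P le O E)\<^sup>* O le_rel P le" by (rule Q_refl[of x P le E, OF xP lerefl[OF xP]])
    thus "quot_le P le E X X" unfolding quot_le_def using xX by blast
  next
    fix X Y assume XP: "X \<in> P // E" and YP: "Y \<in> P // E"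
      and h: "quot_le P le E X Y \<and> quot_le P le E Y X"
    show "X = Y"
    proof (rule ccontr)
      assume ne: "X \<noteq> Y"
      obtain x where xX: "x \<in> X" using in_quotient_imp_non_empty[OF eq XP] by blast
      obtain y where yY: "y \<in> Y" using in_quotient_imp_non_empty[OF eq YP] by blast
      have "rho x < rho y" using qstrict[OF XP YP _ ne xX yY] h by blast
      moreover have "rho y < rho x" using qstrict[OF YP XP _ _ yY xX] h ne by blast
      ultimately show False by simp
    qed
  next
    fix X Y Z assume XP: "X \<in> P // E" and YP: "Y \<in> P // E" and ZP: "Z \<in> P // E"
      and h: "quot_le P le E X Y \<and> quot_le P le E Y Z"
    obtain x y where xX: "x \<in> X" and yY: "y \<in> Y" and q1: "(x, y) \<in> (le_rel P le O E)\<^sup>* O le_rel P le"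
      using h unfolding quot_le_def by blast
    obtain y' z where yY': "y' \<in> Y" and zZ: "z \<in> Z" and q2: "(y', z) \<in> (le_rel P le O E)\<^sup>* O le_rel P le"
      using h unfolding quot_le_def by blast
    have "(y, y') \<in> E" using inrel[OF YP yY yY'] .
    hence "(x, z) \<in> (le_rel P le O E)\<^sup>* O le_rel P le" by (rule Q_trans[OF q1 _ q2])
    thus "quot_le P le E X Z" unfolding quot_le_def using xX zZ by blast
  qed
  have P2: "\<forall>X\<in>P // E. \<forall>Y\<in>P // E.
           covers (P // E) (quot_le P le E) X Y \<longleftrightarrow> (\<exists>x\<in>X. \<exists>y\<in>Y. covers P le x y)"
  proof (intro ballI iffI)
    fix X Y assume XP: "X \<in> P // E" and YP: "Y \<in> P // E"
      and cv: "covers (P // E) (quot_le P le E) X Y"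
    obtain x y where xX: "x \<in> X" and yY: "y \<in> Y" and q: "(x, y) \<in> (le_rel P le O E)\<^sup>* O le_rel P le"
      using cv unfolding covers_def quot_le_def by blast
    obtain a where xa: "(x, a) \<in> (le_rel P le O E)\<^sup>*" and ay: "(a, y) \<in> le_rel P le" using q by blast
    have ayQ: "(a, y) \<in> (le_rel P le O E)\<^sup>* O le_rel P le" using ay by blast
    have "a \<in> X \<or> (\<exists>u\<in>X. \<exists>v\<in>Y. le u v)" using cross[OF eq po cv xa xX ayQ yY] .
    then obtain u v where uX: "u \<in> X" and vY: "v \<in> Y" and uv: "le u v"
      using ay yY unfolding le_rel_def by blast
    have XY: "X \<noteq> Y" using cv unfolding covers_def by blast
    have uP: "u \<in> P" and vP: "v \<in> P" using sub XP uX YP vY by auto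
    have uv': "u \<noteq> v" using qeq[OF XP YP uX vY] XY eq uP unfolding equiv_def refl_on_def by blast
    have "covers P le u v"
      unfolding covers_def
    proof (intro conjI uP vP uv uv' notI)
      assume "\<exists>z\<in>P. le u z \<and> le z v \<and> z \<noteq> u \<and> z \<noteq> v"
      then obtain w where wP: "w \<in> P" and uw: "le u w" and wv: "le w v" and wu: "w \<noteq> u" and wv': "w \<noteq> v"
        by blast
      have r1: "rho u < rho w" using rank_strict[OF fin gr uP wP uw] wu by metis
      have r2: "rho w < rho v" using rank_strict[OF fin gr wP vP wv wv'] .
      define W where "W = E `` {w}"
      have WP: "W \<in> P // E" unfolding W_def using wP by (rule quotientI)
      have wW: "w \<in> W" unfolding W_def using eq wP by (rule equiv_class_self)
      have "quot_le P le E X W" unfolding quot_le_def using uX wW uw uP wP unfolding le_rel_def by blast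
      moreover have "quot_le P le E W Y" unfolding quot_le_def using vY wW wv vP wP unfolding le_rel_def by blast
      ultimately have "W = X \<or> W = Y" using cv WP unfolding covers_def by blast
      moreover have "W = X \<Longrightarrow> rho w = rho u" using rE inrel[OF XP _ uX, of w] wW by metis
      moreover have "W = Y \<Longrightarrow> rho w = rho v" using rE inrel[OF YP _ vY, of w] wW by metis
      ultimately show False using r1 r2 by auto
    qed
    thus "\<exists>x\<in>X. \<exists>y\<in>Y. covers P le x y" using uX vY by blast
  next
    fix X Y assume XP: "X \<in> P // E" and YP: "Y \<in> P // E"
      and h: "\<exists>x\<in>X. \<exists>y\<in>Y. covers P le x y"
    then obtain x y where xX: "x \<in> X" and yY: "y \<in> Y" and cxy: "covers P le x y" by blast
    have xP: "x \<in> P" and yP: "y \<in> P" and lxy: "le x y" using cxy unfolding covers_def by auto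
    have ry: "rho y = rho x + 1" using cov cxy .
    have XY: "quot_le P le E X Y" unfolding quot_le_def using xX yY lxy xP yP unfolding le_rel_def by blast
    have ne: "X \<noteq> Y"
    proof
      assume "X = Y"
      hence "(x, y) \<in> E" using qeq[OF XP YP xX yY] by blast
      thus False using rE ry by force
    qed
    show "covers (P // E) (quot_le P le E) X Y"
      unfolding covers_def
    proof (intro conjI XP YP XY ne notI)
      assume "\<exists>Z\<in>P // E. quot_le P le E X Z \<and> quot_le P le E Z Y \<and> Z \<noteq> X \<and> Z \<noteq> Y"
      then obtain W where WP: "W \<in> P // E" and XW: "quot_le P le E X W" and WY: "quot_le P le E W Y"
        and n1: "W \<noteq> X" and n2: "W \<noteq> Y" by blast
      obtain w where wW: "w \<in> W" using in_quotient_imp_non_empty[OF eq WP] by blast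
      have "rho x < rho w" using qstrict[OF XP WP XW _ xX wW] n1 by metis
      moreover have "rho w < rho y" using qstrict[OF WP YP WY n2 wW yY] .
      ultimately show False using ry by simp
    qed
  qed
  define rhoQ where "rhoQ X = rho (SOME x. x \<in> X)" for X
  have rq: "\<forall>X\<in>P // E. \<forall>x\<in>X. rhoQ X = rho x"
  proof (intro ballI)
    fix X x assume XP: "X \<in> P // E" and xX: "x \<in> X"
    have "(SOME x. x \<in> X) \<in> X" using xX by (rule someI)
    thus "rhoQ X = rho x" unfolding rhoQ_def using rE inrel[OF XP _ xX] by metis
  qed
  have G: "graded (P // E) (quot_le P le E) rhoQ"
    unfolding graded_def
  proof (intro conjI P1 ballI impI allI)
    fix X assume XP: "X \<in> P // E" and mn: "\<forall>Y\<in>P // E. quot_le P le E Y X \<longrightarrow> Y = X"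
    obtain x where xX: "x \<in> X" using in_quotient_imp_non_empty[OF eq XP] by blast
    have xP: "x \<in> P" using sub XP xX .
    have "\<forall>y\<in>P. le y x \<longrightarrow> y = x"
    proof (intro ballI impI)
      fix y assume yP: "y \<in> P" and yx: "le y x"
      define Y where "Y = E `` {y}"
      have YP: "Y \<in> P // E" unfolding Y_def using yP by (rule quotientI)
      have yY: "y \<in> Y" unfolding Y_def using eq yP by (rule equiv_class_self)
      have "quot_le P le E Y X" unfolding quot_le_def using yY xX yx xP yP unfolding le_rel_def by blast
      hence "Y = X" using mn YP by blast
      hence "(y, x) \<in> E" using qeq[OF YP XP yY xX] by blast
      hence "rho y = rho x" using rE by blast
      thus "y = x" using rank_strict[OF fin gr yP xP yx] by fastforce
    qed
    hence "rho x = 0" using gr xP unfolding graded_def by blast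
    thus "rhoQ X = 0" using rq XP xX by simp
  next
    fix X Y assume cv: "covers (P // E) (quot_le P le E) X Y"
    have XP: "X \<in> P // E" and YP: "Y \<in> P // E" using cv unfolding covers_def by auto
    obtain x y where xX: "x \<in> X" and yY: "y \<in> Y" and cxy: "covers P le x y" using P2 XP YP cv by blast
    show "rhoQ Y = rhoQ X + 1" using cov[OF cxy] rq XP YP xX yY by simp
  qed
  show ?thesis using P1 P2 G rq by blast
qed

end
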